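(* Let $f\in\mathcal U(1)$ and $a_2=f''(0)/2$. Then $$\operatorname{Re}\sqrt{\frac{f(z)}{z}}>\alpha(|a_2|)\qquad\text{for } z\in\mathbb D,$$ where the square root is the branch equal to $1$ at $z=0$ and $$\alpha(x)=\frac{20+x-\sqrt{x^2+40x+16}}{24},\qquad 0\le x\le 2.$$
   Context: $\mathbb D=\{z\in\mathbb C:|z|<1\}$. $\mathcal A$ is the class of functions $f$ analytic in $\mathbb D$ with $f(z)=z+\sum_{k\ge2}a_kz^k$. For $f\in\mathcal A$ with $f(z)\ne0$ for $z\in\mathbb D\setminus\{0\}$, set $U_f(z)=\left(\frac{z}{f(z)}\right)^2f'(z)-1$. $\mathcal U(1)$ is the class of such $f\in\mathcal A$ with $|U_f(z)|<1$ for all $z\in\mathbb D$ (for such $f$ one has $|a_2|\le 2$ and $f(z)/z\ne0$ in $\mathbb D$). *)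

theory Defs
  imports "HOL-Analysis.Analysis"
begin

definition classA :: "(complex \<Rightarrow> complex) \<Rightarrow> bool" where
  "classA f \<longleftrightarrow> f holomorphic_on ball 0 1 \<and> f 0 = 0 \<and> deriv f 0 = 1"

text \<open>U_f(z) = (z/f(z))^2 f'(z) - 1 (for z \<noteq> 0; at z = 0 its removable value is 0).\<close>
definition U_op :: "(complex \<Rightarrow> complex) \<Rightarrow> complex \<Rightarrow> complex" where
  "U_op f z = (z / f z)^2 * deriv f z - 1"

definition classU1 :: "(complex \<Rightarrow> complex) \<Rightarrow> bool" where
  "classU1 f \<longleftrightarrow> classA f \<and> (\<forall>z\<in>ball 0 1 - {0}. f z \<noteq> 0)
      \<and> (\<forall>z\<in>ball 0 1 - {0}. cmod (U_op f z) < 1)"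

definition alpha :: "real \<Rightarrow> real" where
  "alpha x = (20 + x - sqrt (x^2 + 40*x + 16)) / 24"

end

theory Submission
  imports Defs "HOL-Complex_Analysis.Complex_Analysis"
begin

lemma cube_Complex: "(Complex a b)^3 = Complex (a^3 - 3*a*b^2) (3*a^2*b - b^3)"
  by (simp add: complex_eq_iff power3_eq_cube power2_eq_square algebra_simps)

lemma final_ineq:
  fixes L k s :: real
  assumes L1: "1/2 \<le> L" and L2: "L \<le> 2/3" and kL: "k \<ge> L/(1-L)"
  shows "cmod (Complex (L - (1-L)*k*(1+s^2)) ((1-L) * s) - (Complex L ((1-L) * s))^3)
          \<ge> cmod (Complex L ((1-L) * s)) ^3"
proof -
  define c where "c = 1 - L"
  have c0: "c > 0" using L2 by (simp add: c_def)
  have c2: "c \<le> 1/2" using L1 by (simp add: c_def)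
  have ck: "c*k \<ge> L" using kL c0 by (simp add: c_def field_simps)
  define w where "w = c*k*(1+s^2) - L - L * s^2"
  have w0: "w \<ge> 0"
  proof -
    have "c*k*(1+s^2) \<ge> L*(1+s^2)" using ck by (intro mult_right_mono) auto
    thus ?thesis by (simp add: w_def algebra_simps)
  qed
  define d where "d = L - 1/2"
  have d0: "d \<ge> 0" and d1: "d \<le> 1/6" using L1 L2 by (auto simp: d_def)
  define P1 where "P1 = L^2 - 6*L^2*c^2 + 2*c^4"
  define P2 where "P2 = 2*L^4 + c^2 - 6*L^2*c^2"
  define C1 where "C1 = 2*L * s^2*(1-3*c^2) + 2*L^3"
  have P1e: "P1 = d^2*(7 - 4*d - 4*d^2)" unfolding P1_def d_def c_def
    by (simp add: algebra_simps power2_eq_square power4_eq_xxxx)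
  have P2e: "P2 = d^2*(7 + 4*d - 4*d^2)" unfolding P2_def d_def c_def
    by (simp add: algebra_simps power2_eq_square power4_eq_xxxx)
  have dd: "d*d \<le> 1/6 * (1/6)" using d0 d1 by (intro mult_mono) auto
  have P1p: "P1 \<ge> 0" unfolding P1e using d0 d1 dd
    by (intro mult_nonneg_nonneg) (auto simp: power2_eq_square)
  have P2p: "P2 \<ge> 0" unfolding P2e using d0 d1 dd
    by (intro mult_nonneg_nonneg) (auto simp: power2_eq_square)
  have cc: "c*c \<le> 1/2*(1/2)" using c0 c2 by (intro mult_mono) auto
  have C1p: "C1 \<ge> 0" unfolding C1_def using L1 cc
    by (intro add_nonneg_nonneg mult_nonneg_nonneg) (auto simp: power2_eq_square)
  have key: "cmod (Complex (L - c*k*(1+s^2)) (c * s) - (Complex L (c * s))^3)^2 - (cmod (Complex L (c * s))^2)^3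
      = w^2 + w*C1 + s^2*(s^2*P1+P2)"
    unfolding cube_Complex cmod_power2 w_def C1_def P1_def P2_def
    by (simp add: algebra_simps power2_eq_square power3_eq_cube power4_eq_xxxx)
  have "w^2 + w*C1 + s^2*(s^2*P1+P2) \<ge> 0" using w0 C1p P1p P2p by (intro add_nonneg_nonneg mult_nonneg_nonneg) auto
  hence "(cmod (Complex L (c * s))^3)^2 \<le> cmod (Complex (L - c*k*(1+s^2)) (c * s) - (Complex L (c * s))^3)^2"
    using key by (simp add: power_mult[symmetric] power_mult_distrib)
  hence "cmod (Complex L (c * s))^3 \<le> cmod (Complex (L - c*k*(1+s^2)) (c * s) - (Complex L (c * s))^3)"
    by (rule power2_le_imp_le) simp
  thus ?thesis by (simp add: c_def)
qed

lemma mobius_lt1: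
  fixes a v :: complex
  assumes "cmod a < 1" "cmod v < 1"
  shows "cmod (v - a) < cmod (1 - cnj a * v)"
proof -
  have id: "cmod (1 - cnj a * v)^2 - cmod (v - a)^2 = (1 - cmod a^2) * (1 - cmod v^2)"
    unfolding cmod_power2 by (simp add: algebra_simps power2_eq_square)
  have "cmod a^2 < 1" "cmod v^2 < 1" using assms by (simp_all add: power_less_one_iff abs_less_iff)
  hence "(1 - cmod a^2) * (1 - cmod v^2) > 0" by simp
  hence "cmod (v - a)^2 < cmod (1 - cnj a * v)^2" using id by simp
  thus ?thesis by (rule power2_less_imp_less) simp
qed

lemma pick_bound:
  fixes a v :: complex and r :: real
  assumes a1: "cmod a < 1" and r0: "0 \<le> r" and r1: "r < 1"
    and H: "cmod (v - a) \<le> r * cmod (1 - cnj a * v)"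
  shows "cmod v \<le> (r + cmod a) / (1 + cmod a * r)"
proof -
  define A where "A = cmod a"
  define P where "P = cmod v"
  define R where "R = Re (cnj a * v)"
  have A0: "A \<ge> 0" and P0: "P \<ge> 0" by (auto simp: A_def P_def)
  have RAP: "R \<le> A * P" unfolding R_def A_def P_def
    by (metis complex_Re_le_cmod complex_mod_cnj norm_mult)
  have e1: "cmod (v - a)^2 = P^2 + A^2 - 2*R" unfolding P_def A_def R_def cmod_power2
    by (simp add: algebra_simps power2_eq_square)
  have e2: "cmod (1 - cnj a * v)^2 = 1 - 2*R + A^2*P^2" unfolding P_def A_def R_def cmod_power2
    by (simp add: algebra_simps power2_eq_square)
  have "cmod (v - a)^2 \<le> (r * cmod (1 - cnj a * v))^2"
    using H by (intro power_mono) auto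
  hence "P^2 + A^2 - 2*R \<le> r^2 * (1 - 2*R + A^2*P^2)" using e1 e2 by (simp add: power_mult_distrib)
  hence Q0: "P^2*(1 - r^2*A^2) + A^2 - r^2 \<le> 2*R*(1 - r^2)" by (simp add: algebra_simps)
  have "2*R*(1-r^2) \<le> 2*(A*P)*(1-r^2)"
    using RAP r0 r1 by (intro mult_right_mono mult_left_mono) (auto simp: power_le_one abs_le_iff power2_eq_square intro: mult_le_one)
  with Q0 have Q: "((1+A*r)*P - (r+A)) * ((1-A*r)*P - (A-r)) \<le> 0"
    by (simp add: algebra_simps power2_eq_square)
  have "A*r \<le> 1*r" using a1 r0 unfolding A_def by (intro mult_right_mono) auto
  hence Ar: "A*r < 1" using r1 by simp
  show ?thesis
  proof (rule ccontr)
    assume "\<not> ?thesis"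
    hence "P > (r+A)/(1+A*r)" by (simp add: P_def A_def)
    moreover have pos: "1 + A*r > 0" using A0 r0 by (smt (verit) mult_nonneg_nonneg)
    ultimately have "r+A < P*(1+A*r)" by (simp add: pos_divide_less_eq)
    hence f1: "(1+A*r)*P - (r+A) > 0" by (simp add: algebra_simps)
    have "(1-A*r)*((1+A*r)*P) > (1-A*r)*(r+A)" using f1 Ar by (intro mult_strict_left_mono) auto
    moreover have "(1-A*r)*(r+A) - (A-r)*(1+A*r) = 2*r*(1-A^2)" by (simp add: algebra_simps power2_eq_square)
    moreover have "2*r*(1-A^2) \<ge> 0" using A0 a1 r0 unfolding A_def
      by (intro mult_nonneg_nonneg) (auto simp: power_le_one abs_le_iff power2_eq_square intro: mult_le_one)
    moreover have "(1+A*r)*((1-A*r)*P - (A-r)) = (1-A*r)*((1+A*r)*P) - (A-r)*(1+A*r)"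
      by (simp add: algebra_simps)
    ultimately have "(1+A*r)*((1-A*r)*P - (A-r)) > 0" by linarith
    hence "(1-A*r)*P - (A-r) > 0" using A0 r0 by (simp add: zero_less_mult_iff) (smt (verit) mult_nonneg_nonneg)
    with f1 have "((1+A*r)*P - (r+A)) * ((1-A*r)*P - (A-r)) > 0" by simp
    with Q show False by simp
  qed
qed

lemma schwarz_refined:
  assumes holW: "W holomorphic_on ball 0 1" and W0: "W 0 = 0"
    and Wlt: "\<And>z. cmod z < 1 \<Longrightarrow> cmod (W z) < 1"
  shows "cmod (deriv W 0) \<le> 1"
    and "\<And>z. cmod z < 1 \<Longrightarrow> cmod (W z) \<le> cmod z * ((cmod z + cmod (deriv W 0)) / (1 + cmod (deriv W 0) * cmod z))"
proof -
  show A1: "cmod (deriv W 0) \<le> 1"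
    using Schwarz_Lemma(2)[OF holW W0 Wlt, of 0] by simp
  fix z :: complex assume z: "cmod z < 1"
  define A where "A = cmod (deriv W 0)"
  have Wz: "cmod (W z) \<le> cmod z" using Schwarz_Lemma(1)[OF holW W0 Wlt z] .
  show "cmod (W z) \<le> cmod z * ((cmod z + cmod (deriv W 0)) / (1 + cmod (deriv W 0) * cmod z))"
  proof (cases "A = 1")
    case True
    have "1 + cmod z > 0" by (smt (verit) norm_ge_zero)
    then show ?thesis using Wz True by (simp add: A_def[symmetric] add.commute)
  next
    case False
    hence A1': "A < 1" using A1 by (simp add: A_def)
    obtain h where holh: "h holomorphic_on ball 0 1" and fz: "\<And>z. norm z < 1 \<Longrightarrow> W z = z * h z"
      and d0: "deriv W 0 = h 0" using Schwarz3[OF holW W0] by blast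
    have hlt: "cmod (h w) < 1" if w: "cmod w < 1" for w
    proof (cases "w = 0")
      case True thus ?thesis using A1' d0 by (simp add: A_def)
    next
      case False
      have "cmod w * cmod (h w) \<le> cmod w * 1"
        using Schwarz_Lemma(1)[OF holW W0 Wlt w] fz[OF w] by (simp add: norm_mult)
      hence le: "cmod (h w) \<le> 1" using False by simp
      show ?thesis
      proof (rule ccontr)
        assume "\<not> ?thesis"
        hence "cmod (h w) = 1" using le by simp
        hence "norm (W w) = norm w" using fz[OF w] by (simp add: norm_mult)
        then obtain \<alpha> where al: "\<forall>z. norm z < 1 \<longrightarrow> W z = \<alpha> * z" and n\<alpha>: "norm \<alpha> = 1"
          using Schwarz_Lemma(3)[OF holW W0 Wlt w] w False by blast
        have "((\<lambda>z. \<alpha> * z) has_field_derivative \<alpha>) (at 0)"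
          by (auto intro!: derivative_eq_intros)
        hence "(W has_field_derivative \<alpha>) (at 0)"
          by (rule has_field_derivative_transform_within_open[of _ _ _ "ball 0 1"]) (use al in auto)
        hence "deriv W 0 = \<alpha>" by (rule DERIV_imp_deriv)
        thus False using n\<alpha> A1' by (simp add: A_def)
      qed
    qed
    define a where "a = h 0"
    have aA: "cmod a = A" by (simp add: a_def A_def d0)
    have a1: "cmod a < 1" using aA A1' by simp
    have den: "1 - cnj a * h w \<noteq> 0" if "cmod w < 1" for w
    proof
      assume "1 - cnj a * h w = 0"
      hence "cmod (cnj a * h w) = 1" by (metis eq_iff_diff_eq_0 norm_one)
      moreover have "cmod (cnj a * h w) < 1"
        using a1 hlt[OF that] by (simp add: norm_mult) (metis mult_strict_mono' norm_ge_zero mult_1_right)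
      ultimately show False by simp
    qed
    define \<Phi> where "\<Phi> w = (h w - a) / (1 - cnj a * h w)" for w
    have holP: "\<Phi> holomorphic_on ball 0 1" unfolding \<Phi>_def
      using den by (intro holomorphic_intros holh) auto
    have P0: "\<Phi> 0 = 0" by (simp add: \<Phi>_def a_def)
    have Plt: "cmod (\<Phi> w) < 1" if "cmod w < 1" for w
      using mobius_lt1[OF a1 hlt[OF that]] den[OF that]
      by (simp add: \<Phi>_def norm_divide divide_less_eq)
    have "cmod (\<Phi> z) \<le> cmod z" using Schwarz_Lemma(1)[OF holP P0 Plt z] .
    hence "cmod (h z - a) \<le> cmod z * cmod (1 - cnj a * h z)"
      using den[OF z] by (simp add: \<Phi>_def norm_divide divide_le_eq)
    hence hb: "cmod (h z) \<le> (cmod z + A) / (1 + A * cmod z)"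
      using pick_bound[OF a1 norm_ge_zero z] aA by simp
    have "cmod (W z) = cmod z * cmod (h z)" using fz[OF z] by (simp add: norm_mult)
    also have "\<dots> \<le> cmod z * ((cmod z + A) / (1 + A * cmod z))"
      using hb by (intro mult_left_mono) auto
    finally show ?thesis by (simp add: A_def)
  qed
qed

lemma deriv_normsq:
  assumes "(F has_field_derivative F') (at (of_real t))"
  shows "((\<lambda>x. (cmod (F (of_real x)))^2) has_real_derivative 2 * Re (cnj (F (of_real t)) * F')) (at t)"
proof -
  have v: "((\<lambda>x. F (of_real x)) has_vector_derivative F') (at t)"
    using has_vector_derivative_real_field[OF assms] .
  have "((\<lambda>x. (Re (F (of_real x)))^2 + (Im (F (of_real x)))^2) has_real_derivative
         2 * Re (F (of_real t)) * Re F' + 2 * Im (F (of_real t)) * Im F') (at t)"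
    by (auto intro!: derivative_eq_intros v)
  thus ?thesis by (simp add: cmod_power2 algebra_simps)
qed

lemma Bderiv:
  fixes A :: real assumes "A \<ge> 0"
  shows "((\<lambda>t. (t*(t+A)/(1+A*t))^2) has_real_derivative 4/(1+A)) (at 1)"
proof -
  have p: "1 + A \<noteq> 0" using assms by simp
  have "((\<lambda>t. t*(t+A)/(1+A*t)) has_real_derivative 2/(1+A)) (at 1)"
  proof -
    have p2: "1 + (A*A + A*2) \<noteq> 0" using assms by (smt (verit) mult_nonneg_nonneg)
    show ?thesis using p p2 assms by (auto intro!: derivative_eq_intros simp: field_simps)
  qed
  from DERIV_power[OF this, of 2] show ?thesis using p by (simp add: field_simps)
qed

lemma jack:
  assumes holW: "W holomorphic_on S" and opS: "open S" and cb: "cball 0 1 \<subseteq> S" and W0: "W 0 = 0"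
    and Wlt: "\<And>z. cmod z < 1 \<Longrightarrow> cmod (W z) < 1" and Wle: "\<And>z. cmod z \<le> 1 \<Longrightarrow> cmod (W z) \<le> 1"
    and u1: "cmod u = 1" and Wu: "cmod (W u) = 1"
  shows "\<exists>k::real. u * deriv W u = of_real k * W u \<and> k \<ge> 2/(1 + cmod (deriv W 0)) \<and> cmod (deriv W 0) \<le> 1"
proof -
  have holB: "W holomorphic_on ball 0 1" using holW cb ball_subset_cball by (blast intro: holomorphic_on_subset)
  define A where "A = cmod (deriv W 0)"
  have A1: "A \<le> 1" using schwarz_refined(1)[OF holB W0 Wlt] by (simp add: A_def)
  have A0: "A \<ge> 0" by (simp add: A_def)
  have bnd: "cmod (W z) \<le> cmod z * ((cmod z + A) / (1 + A * cmod z))" if "cmod z < 1" for z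
    using schwarz_refined(2)[OF holB W0 Wlt that] by (simp add: A_def)
  have dW: "(W has_field_derivative deriv W z) (at z)" if "z \<in> S" for z
    using holomorphic_derivI[OF holW opS that] .
  have uS: "u \<in> S" using cb u1 by auto
  define q where "q = cnj (W u) * (u * deriv W u)"
  have Imq: "Im q = 0"
  proof -
    have d1: "((\<lambda>\<zeta>. W (u * exp (\<i> * \<zeta>))) has_field_derivative deriv W (u * exp (\<i> * of_real 0)) * (u * (exp (\<i> * of_real 0) * \<i>))) (at (of_real 0))"
      apply (rule DERIV_chain2[where f = W])
       apply (rule dW) using uS apply simp
      by (auto intro!: derivative_eq_intros)
    note d2 = deriv_normsq[OF d1]
    have "2 * Re (cnj (W (u * exp (\<i> * of_real 0))) * (deriv W (u * exp (\<i> * of_real 0)) * (u * (exp (\<i> * of_real 0) * \<i>)))) = 0"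
    proof (rule DERIV_local_max[OF d2, of 1])
      show "\<forall>y. \<bar>0 - y\<bar> < 1 \<longrightarrow> (cmod (W (u * exp (\<i> * complex_of_real y))))\<^sup>2 \<le> (cmod (W (u * exp (\<i> * complex_of_real 0))))\<^sup>2"
      proof (intro allI impI)
        fix y :: real
        have "cmod (u * exp (\<i> * complex_of_real y)) = 1" using u1 by (simp add: norm_mult)
        hence "cmod (W (u * exp (\<i> * complex_of_real y))) \<le> 1" using Wle by simp
        thus "(cmod (W (u * exp (\<i> * complex_of_real y))))\<^sup>2 \<le> (cmod (W (u * exp (\<i> * complex_of_real 0))))\<^sup>2"
          using Wu by (simp add: power_le_one)
      qed
    qed simp
    thus ?thesis by (simp add: q_def algebra_simps)
  qed
  have Req: "Re q \<ge> 2/(1+A)"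
  proof (rule ccontr)
    assume "\<not> ?thesis"
    hence neg: "2 * Re q - 4/(1+A) < 0" by simp
    have d1: "((\<lambda>\<zeta>. W (\<zeta> * u)) has_field_derivative deriv W (of_real 1 * u) * u) (at (of_real 1))"
      apply (rule DERIV_chain2[where f = W])
       apply (rule dW) using uS apply simp
      by (auto intro!: derivative_eq_intros)
    note d2 = deriv_normsq[OF d1]
    have d3: "((\<lambda>t. (cmod (W (of_real t * u)))^2 - (t*(t+A)/(1+A*t))^2) has_real_derivative 2 * Re q - 4/(1+A)) (at 1)"
      using DERIV_diff[OF d2 Bderiv[OF A0]] by (simp add: q_def algebra_simps)
    obtain d where d: "d > 0" and dd: "\<And>h. h > 0 \<Longrightarrow> h < d \<Longrightarrow>
        (cmod (W (of_real 1 * u)))^2 - (1*(1+A)/(1+A*1))^2 < (cmod (W (of_real (1-h) * u)))^2 - ((1-h)*((1-h)+A)/(1+A*(1-h)))^2"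
      using DERIV_neg_dec_left[OF d3 neg] by blast
    define h where "h = min (d/2) (1/2)"
    have h0: "h > 0" "h < d" "h \<le> 1/2" using d by (auto simp: h_def)
    have "(1*(1+A)/(1+A*1)) = 1" using A0 by simp
    hence lt: "((1-h)*((1-h)+A)/(1+A*(1-h)))^2 < (cmod (W (of_real (1-h) * u)))^2"
      using dd[OF h0(1,2)] Wu by simp
    have nz: "cmod (of_real (1-h) * u) = 1 - h" using u1 h0 by (simp add: norm_mult norm_of_real del: of_real_diff)
    have "cmod (W (of_real (1-h) * u)) \<le> (1-h) * (((1-h) + A) / (1 + A * (1-h)))"
      using bnd[of "of_real (1-h) * u"] nz h0 by simp
    hence "(cmod (W (of_real (1-h) * u)))^2 \<le> ((1-h) * (((1-h) + A) / (1 + A * (1-h))))^2"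
      by (intro power_mono) auto
    with lt show False by simp
  qed
  have qk: "q = of_real (Re q)" using Imq by (simp add: complex_eq_iff)
  have "cnj (W u) * W u = 1"
    using complex_norm_square[of "W u"] Wu by (simp add: mult.commute)
  hence "u * deriv W u = q * W u" by (simp add: q_def algebra_simps)
  hence "u * deriv W u = of_real (Re q) * W u" using qk by simp
  thus ?thesis using Req A1 by (auto simp: A_def)
qed

lemma bisector:
  fixes w :: complex and L :: real
  shows "cmod (w - 1)^2 - cmod (w - of_real (2*L-1))^2 = -4*(1-L)*(Re w - L)"
  unfolding cmod_power2 by (simp add: algebra_simps power2_eq_square)

lemma alpha_facts:
  assumes x0: "x \<ge> 0"
  shows "alpha x \<le> 2/3" and "x \<le> 2 \<Longrightarrow> alpha x \<ge> 1/2" and "x > 2 \<Longrightarrow> alpha x < 1/2"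
    and "8*(1 - alpha x)^2 = alpha x * (4*(1 - alpha x) + x)"
proof -
  define S where "S = sqrt (x^2+40*x+16)"
  have nn: "0 \<le> x^2+40*x+16" using x0 by (intro add_nonneg_nonneg) auto
  hence S2: "S^2 = x^2+40*x+16" unfolding S_def by (rule real_sqrt_pow2)
  have S0: "S \<ge> 0" unfolding S_def using nn by simp
  have a: "alpha x = (20 + x - S)/24" by (simp add: alpha_def S_def)
  have "S \<ge> sqrt ((x+4)^2)" unfolding S_def using x0
    by (intro real_sqrt_le_mono) (simp add: power2_eq_square algebra_simps)
  hence "S \<ge> x + 4" using x0 by simp
  thus "alpha x \<le> 2/3" unfolding a by simp
  show "x \<le> 2 \<Longrightarrow> alpha x \<ge> 1/2"
  proof -
    assume "x \<le> 2"
    hence "S \<le> sqrt ((x+8)^2)" unfolding S_def using x0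
      by (intro real_sqrt_le_mono) (simp add: power2_eq_square algebra_simps)
    hence "S \<le> x + 8" using x0 by simp
    thus ?thesis unfolding a by simp
  qed
  show "x > 2 \<Longrightarrow> alpha x < 1/2"
  proof -
    assume "x > 2"
    hence "S > sqrt ((x+8)^2)" unfolding S_def using x0
      by (intro real_sqrt_less_mono) (simp add: power2_eq_square algebra_simps)
    hence "S > x + 8" using x0 by simp
    thus ?thesis unfolding a by simp
  qed
  show "8*(1 - alpha x)^2 = alpha x * (4*(1 - alpha x) + x)"
    unfolding a using S2 by (simp add: field_simps power2_eq_square)
qed

theorem theorem4p1:
  fixes f g :: "complex \<Rightarrow> complex"
  assumes "classU1 f"
    and "g holomorphic_on ball 0 1"
    and "g 0 = 1"
    and "\<forall>z\<in>ball 0 1 - {0}. (g z)^2 = f z / z"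
  shows "\<forall>z\<in>ball 0 1. Re (g z) > alpha (cmod (deriv (deriv f) 0 / 2))"
proof -
  have holf: "f holomorphic_on ball 0 1" and f0: "f 0 = 0"
    and fnz: "\<forall>z\<in>ball 0 1 - {0}. f z \<noteq> 0" and Ult: "\<forall>z\<in>ball 0 1 - {0}. cmod (U_op f z) < 1"
    using assms(1) unfolding classU1_def classA_def by auto
  have holg: "g holomorphic_on ball 0 1" and g0: "g 0 = 1" using assms(2,3) by auto
  have gsq: "\<And>z. z \<in> ball 0 1 \<Longrightarrow> z \<noteq> 0 \<Longrightarrow> (g z)^2 = f z / z" using assms(4) by auto
  have fg: "f z = z * (g z)^2" if "z \<in> ball 0 1" for z
  proof (cases "z = 0")
    case True thus ?thesis using f0 by simp
  next
    case False thus ?thesis using gsq[OF that False] by (simp add: field_simps)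
  qed
  have gnz: "g z \<noteq> 0" if "z \<in> ball 0 1" for z
  proof (cases "z = 0")
    case True thus ?thesis using g0 by simp
  next
    case False thus ?thesis using gsq[OF that False] fnz that by auto
  qed
  have dg: "(g has_field_derivative deriv g z) (at z)" if "z \<in> ball 0 1" for z
    using holomorphic_derivI[OF holg open_ball that] .
  have holdg: "deriv g holomorphic_on ball 0 1" using holg by (intro holomorphic_deriv) auto
  have ddg: "(deriv g has_field_derivative deriv (deriv g) z) (at z)" if "z \<in> ball 0 1" for z
    using holomorphic_derivI[OF holdg open_ball that] .
  have dfz: "deriv f z = (g z)^2 + 2 * z * g z * deriv g z" if z: "z \<in> ball 0 1" for z
  proof -
    have "((\<lambda>w. w * (g w)^2) has_field_derivative (g z)^2 + 2 * z * g z * deriv g z) (at z)"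
      using dg[OF z] by (auto intro!: derivative_eq_intros simp: algebra_simps)
    hence "(f has_field_derivative (g z)^2 + 2 * z * g z * deriv g z) (at z)"
      by (rule has_field_derivative_transform_within_open[of _ _ _ "ball 0 1"]) (use z fg in auto)
    thus ?thesis by (rule DERIV_imp_deriv)
  qed
  have d2f: "deriv (deriv f) 0 = 4 * deriv g 0"
  proof -
    have z0: "(0::complex) \<in> ball 0 1" by simp
    have "((\<lambda>w. (g w)^2 + 2 * w * g w * deriv g w) has_field_derivative 4 * deriv g 0) (at 0)"
      using dg[OF z0] ddg[OF z0] g0 by (auto intro!: derivative_eq_intros simp: algebra_simps)
    hence "(deriv f has_field_derivative 4 * deriv g 0) (at 0)"
      by (rule has_field_derivative_transform_within_open[of _ _ _ "ball 0 1"]) (use dfz in auto)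
    thus ?thesis by (rule DERIV_imp_deriv)
  qed
  define x where "x = cmod (deriv (deriv f) 0 / 2)"
  have x0: "x \<ge> 0" by (simp add: x_def)
  have xg: "cmod (deriv g 0) = x/2" by (simp add: x_def d2f norm_mult norm_divide)
  have Uform: "U_op f z = (g z + 2 * z * deriv g z) / (g z)^3 - 1" if z: "z \<in> ball 0 1" "z \<noteq> 0" for z
    unfolding U_op_def using fg[OF z(1)] dfz[OF z(1)] gnz[OF z(1)] z(2)
    by (simp add: field_simps power2_eq_square power3_eq_cube)
  define L where "L = (if x \<le> 2 then alpha x else 1/2)"
  have aL: "alpha x \<le> L" using alpha_facts(3)[OF x0] by (auto simp: L_def)
  have L1: "1/2 \<le> L" using alpha_facts(2)[OF x0] by (auto simp: L_def)
  have L2: "L \<le> 2/3" using alpha_facts(1)[OF x0] by (auto simp: L_def)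
  define c where "c = 1 - L"
  have c0: "c > 0" using L2 by (simp add: c_def)
  have kcond: "2/(1+A) \<ge> L/c" if A1: "A \<le> 1" and A0: "A \<ge> 0" and Ax: "A \<le> x/(4*c)" for A
  proof (cases "x \<le> 2")
    case True
    hence Lx: "L = alpha x" by (simp add: L_def)
    have id: "8*c^2 = L*(4*c + x)" using alpha_facts(4)[OF x0] by (simp add: Lx c_def)
    have "2/(1 + x/(4*c)) \<le> 2/(1+A)" using A0 Ax by (intro divide_left_mono) auto
    moreover have "2/(1 + x/(4*c)) = 8*c/(4*c+x)" using c0 by (simp add: field_simps)
    moreover have "8*c/(4*c+x) = L/c" using id c0 x0 by (simp add: field_simps power2_eq_square)
    ultimately show ?thesis by simp
  next
    case False
    hence "L = 1/2" by (simp add: L_def)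
    hence "L/c = 1" by (simp add: c_def)
    moreover have "2/(1+A) \<ge> 1" using A1 A0 by simp
    ultimately show ?thesis by simp
  qed
  have main: "\<forall>z\<in>ball 0 1. Re (g z) > L"
  proof (rule ccontr)
    assume "\<not> ?thesis"
    then obtain z1 where z1: "z1 \<in> ball 0 1" "Re (g z1) \<le> L" by (auto simp: not_less)
    define \<rho> where "\<rho> = cmod z1"
    have \<rho>1: "\<rho> < 1" using z1 by (simp add: \<rho>_def)
    have contg: "continuous_on (ball 0 1) g" using holg by (rule holomorphic_on_imp_continuous_on)
    have contRe: "continuous_on (cball 0 \<rho>) (\<lambda>z. Re (g z))"
      using \<rho>1 by (intro continuous_intros continuous_on_subset[OF contg]) auto
    define K where "K = cball 0 \<rho> \<inter> (\<lambda>z. Re (g z)) -` {..L}"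
    have clK: "closed K" unfolding K_def
      by (rule continuous_closed_preimage[OF contRe closed_cball closed_atMost])
    have "compact (cball 0 \<rho> \<inter> K)" by (rule compact_Int_closed[OF compact_cball clK])
    hence cK: "compact K" by (simp add: K_def Int_absorb1)
    have z1K: "z1 \<in> K" using z1 by (simp add: K_def \<rho>_def)
    obtain z0 where z0K: "z0 \<in> K" and z0min: "\<And>y. y \<in> K \<Longrightarrow> cmod z0 \<le> cmod y"
      using continuous_attains_inf[OF cK _ continuous_on_norm_id] z1K by blast
    define r where "r = cmod z0"
    have r\<rho>: "r \<le> \<rho>" using z0K by (simp add: K_def r_def)
    have r1: "r < 1" using r\<rho> \<rho>1 by simp
    have inner: "Re (g z) > L" if "cmod z < r" for z
    proof (rule ccontr)
      assume "\<not> ?thesis"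
      hence "z \<in> K" using that r\<rho> by (simp add: K_def not_less)
      from z0min[OF this] that show False by (simp add: r_def)
    qed
    have z0ne: "z0 \<noteq> 0"
    proof
      assume "z0 = 0" thus False using z0K g0 L2 by (simp add: K_def)
    qed
    have r0: "r > 0" using z0ne by (simp add: r_def)
    have closedB: "Re (g z) \<ge> L" if zr: "cmod z \<le> r" for z
    proof (rule ccontr)
      assume "\<not> ?thesis"
      hence lt: "Re (g z) < L" by simp
      have zne: "z \<noteq> 0" using lt g0 L2 by auto
      have cont: "continuous_on {0..1} (\<lambda>t::real. Re (g (of_real t * z)))"
      proof -
        have "continuous_on {0..1} (\<lambda>t::real. of_real t * z)" by (intro continuous_intros)
        moreover have "(\<lambda>t::real. of_real t * z) ` {0..1} \<subseteq> ball 0 1"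
        proof
          fix y assume "y \<in> (\<lambda>t::real. of_real t * z) ` {0..1}"
          then obtain t where t: "t \<in> {0..1}" "y = of_real t * z" by auto
          have "cmod y = t * cmod z" using t by (simp add: norm_mult)
          also have "\<dots> \<le> 1 * cmod z" using t by (intro mult_right_mono) auto
          finally show "y \<in> ball 0 1" using zr r1 by simp
        qed
        ultimately have "continuous_on {0..1} (g \<circ> (\<lambda>t::real. of_real t * z))"
          by (intro continuous_on_compose continuous_on_subset[OF contg])
        thus ?thesis by (intro continuous_intros) (simp add: o_def)
      qed
      obtain t where t: "0 \<le> t" "t \<le> 1" "Re (g (of_real t * z)) = L"
        using IVT2'[of "\<lambda>t::real. Re (g (of_real t * z))" 1 L 0, OF _ _ _ cont] lt g0 L2 by auto
      have t1: "t < 1" using t lt by (cases "t = 1") auto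
      have "cmod (of_real t * z) = t * cmod z" using t by (simp add: norm_mult)
      also have "\<dots> < 1 * cmod z" using t1 zne by (intro mult_strict_right_mono) auto
      finally have "cmod (of_real t * z) < r" using zr by simp
      from inner[OF this] t show False by simp
    qed
    have Rz0: "Re (g z0) = L" using closedB[of z0] z0K by (simp add: K_def r_def)
    define a where "a = 2*L - 1"
    define S where "S = ball 0 1 \<inter> (\<lambda>z. Re (g z)) -` {a<..}"
    have opS: "open S" unfolding S_def
      using continuous_open_preimage[of "ball 0 1" "\<lambda>z. Re (g z)" "{a<..}"] contg
      by (auto intro: continuous_intros)
    define SW where "SW = UNIV \<inter> (\<lambda>\<zeta>. of_real r * \<zeta>) -` S"
    have opSW: "open SW" unfolding SW_def
      by (rule continuous_open_preimage[OF _ open_UNIV opS]) (intro continuous_intros)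
    define W where "W \<zeta> = (g (of_real r * \<zeta>) - 1) / (g (of_real r * \<zeta>) - of_real a)" for \<zeta>
    have denW: "g (of_real r * \<zeta>) - of_real a \<noteq> 0" if "\<zeta> \<in> SW" for \<zeta>
    proof
      assume "g (of_real r * \<zeta>) - of_real a = 0"
      hence "Re (g (of_real r * \<zeta>)) = a" by (metis Re_complex_of_real eq_iff_diff_eq_0)
      thus False using that by (simp add: SW_def S_def)
    qed
    have inSW: "of_real r * \<zeta> \<in> ball 0 1" if "\<zeta> \<in> SW" for \<zeta> using that by (simp add: SW_def S_def)
    have dW: "(W has_field_derivative (deriv g (of_real r * \<zeta>) * of_real r * (1 - of_real a)) / (g (of_real r * \<zeta>) - of_real a)^2) (at \<zeta>)"
      if \<zeta>: "\<zeta> \<in> SW" for \<zeta>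
    proof -
      have d1: "((\<lambda>\<zeta>. g (of_real r * \<zeta>)) has_field_derivative deriv g (of_real r * \<zeta>) * of_real r) (at \<zeta>)"
        by (rule DERIV_chain2[where g = "\<lambda>\<zeta>. of_real r * \<zeta>" and x = \<zeta>, OF dg[OF inSW[OF \<zeta>]]]) (auto intro!: derivative_eq_intros)
      have "(W has_field_derivative ((deriv g (of_real r * \<zeta>) * of_real r) * (g (of_real r * \<zeta>) - of_real a)
              - (g (of_real r * \<zeta>) - 1) * (deriv g (of_real r * \<zeta>) * of_real r)) / ((g (of_real r * \<zeta>) - of_real a) * (g (of_real r * \<zeta>) - of_real a))) (at \<zeta>)"
        unfolding W_def
        using DERIV_divide[OF DERIV_diff[OF d1 DERIV_const] DERIV_diff[OF d1 DERIV_const] denW[OF \<zeta>]] by simp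
      thus ?thesis by (simp add: algebra_simps power2_eq_square)
    qed
    have holW: "W holomorphic_on SW" using opSW dW by (auto simp: holomorphic_on_open)
    have L1': "L < 1" using L2 by simp
    have cbSW: "cball 0 1 \<subseteq> SW"
    proof
      fix \<zeta> :: complex assume "\<zeta> \<in> cball 0 1"
      hence n: "cmod (of_real r * \<zeta>) \<le> r" using r0 by (simp add: norm_mult mult_le_cancel_left1)
      hence "Re (g (of_real r * \<zeta>)) \<ge> L" by (rule closedB)
      moreover have "cmod (of_real r * \<zeta>) < 1" using n r1 by simp
      ultimately show "\<zeta> \<in> SW" using L1' by (simp add: SW_def S_def a_def)
    qed
    have W0: "W 0 = 0" by (simp add: W_def g0)
    have Wcmp: "cmod (W \<zeta>)^2 - 1 = (-4*(1-L)*(Re (g (of_real r * \<zeta>)) - L)) / cmod (g (of_real r * \<zeta>) - of_real a)^2"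
      if "\<zeta> \<in> SW" for \<zeta>
      using bisector[of "g (of_real r * \<zeta>)" L] denW[OF that]
      by (simp add: W_def norm_divide power_divide field_simps a_def)
    have Wlt: "cmod (W \<zeta>) < 1" if "cmod \<zeta> < 1" for \<zeta>
    proof -
      have \<zeta>S: "\<zeta> \<in> SW" using cbSW that by auto
      have "cmod (of_real r * \<zeta>) < r" using that r0 by (simp add: norm_mult)
      hence "Re (g (of_real r * \<zeta>)) > L" by (rule inner)
      hence num: "-4*(1-L)*(Re (g (of_real r * \<zeta>)) - L) < 0" using L1' by (intro mult_neg_pos) auto
      have den: "cmod (g (of_real r * \<zeta>) - of_real a)^2 > 0" using denW[OF \<zeta>S] by simp
      have "cmod (W \<zeta>)^2 - 1 < 0" unfolding Wcmp[OF \<zeta>S] using num den by (rule divide_neg_pos)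
      thus ?thesis by (simp add: power_less_one_iff abs_less_iff)
    qed
    have Wle: "cmod (W \<zeta>) \<le> 1" if "cmod \<zeta> \<le> 1" for \<zeta>
    proof -
      have \<zeta>S: "\<zeta> \<in> SW" using cbSW that by auto
      have "cmod (of_real r * \<zeta>) \<le> r" using that r0 by (simp add: norm_mult mult_le_cancel_left1)
      hence "Re (g (of_real r * \<zeta>)) \<ge> L" by (rule closedB)
      hence num: "-4*(1-L)*(Re (g (of_real r * \<zeta>)) - L) \<le> 0" using L1' by (intro mult_nonpos_nonneg) auto
      have "cmod (W \<zeta>)^2 - 1 \<le> 0" unfolding Wcmp[OF \<zeta>S] using num by (rule divide_nonpos_nonneg) simp
      thus ?thesis by (smt (verit) norm_ge_zero power2_le_imp_le power_one)
    qed
    define u where "u = z0 / of_real r"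
    have u1: "cmod u = 1" using r0 by (simp add: u_def norm_divide r_def)
    have ru: "of_real r * u = z0" using r0 by (simp add: u_def)
    have Wu: "cmod (W u) = 1"
    proof -
      have uS: "u \<in> SW" using cbSW u1 by auto
      have "cmod (W u)^2 - 1 = 0" using Wcmp[OF uS] Rz0 by (simp add: ru)
      thus ?thesis by (smt (verit) norm_ge_zero power2_eq_1_iff)
    qed
    obtain k :: real where kW: "u * deriv W u = of_real k * W u" and kA: "k \<ge> 2/(1 + cmod (deriv W 0))"
      and A1: "cmod (deriv W 0) \<le> 1"
      using jack[OF holW opSW cbSW W0 Wlt Wle u1 Wu] by blast
    have a1: "1 - of_real a = (2 * of_real c :: complex)" by (simp add: a_def c_def)
    have dW0: "deriv W 0 = deriv g 0 * of_real r / (2 * of_real c)"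
    proof -
      have "0 \<in> SW" using cbSW by auto
      from DERIV_imp_deriv[OF dW[OF this]] show ?thesis using c0 g0 a1
        by (simp add: power2_eq_square field_simps)
    qed
    have Ax: "cmod (deriv W 0) \<le> x/(4*c)"
    proof -
      have "cmod (deriv W 0) = (x/2) * r / (2*c)" using c0 r0 by (simp add: dW0 norm_mult norm_divide xg)
      also have "\<dots> \<le> (x/2) * 1 / (2*c)" using r1 x0 c0 by (intro divide_right_mono mult_left_mono) auto
      finally show ?thesis by simp
    qed
    have kL: "k \<ge> L/c" using kA kcond[OF A1 norm_ge_zero Ax] by simp
    define G where "G = g z0"
    define b where "b = Im G"
    have GC: "G = Complex L b" using Rz0 by (simp add: G_def b_def complex_eq_iff)
    have uS: "u \<in> SW" using cbSW u1 by auto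
    have dWu: "deriv W u = deriv g z0 * of_real r * (2 * of_real c) / (G - of_real a)^2"
      using DERIV_imp_deriv[OF dW[OF uS]] a1 by (simp add: ru G_def)
    have Gna: "G - of_real a \<noteq> 0" using denW[OF uS] by (simp add: ru G_def)
    have WuG: "W u = (G - 1) / (G - of_real a)" by (simp add: W_def ru G_def)
    have "z0 * deriv g z0 * (2 * of_real c) / (G - of_real a)^2 = of_real k * ((G - 1) / (G - of_real a))"
      using kW by (simp add: dWu WuG ru[symmetric] algebra_simps)
    hence "(z0 * deriv g z0 * (2 * of_real c)) * (G - of_real a) = (of_real k * (G - 1)) * (G - of_real a)^2"
      using Gna by (simp add: frac_eq_eq)
    hence "(z0 * deriv g z0 * (2 * of_real c)) * (G - of_real a) = (of_real k * (G - 1) * (G - of_real a)) * (G - of_real a)"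
      by (simp add: power2_eq_square algebra_simps)
    hence "z0 * deriv g z0 * (2 * of_real c) = of_real k * (G - 1) * (G - of_real a)"
      using Gna by (simp only: mult_cancel_right) simp
    hence e2: "2 * z0 * deriv g z0 = of_real k * ((G - 1) * (G - of_real a)) / of_real c"
      using c0 by (simp add: field_simps)
    have P: "(G - 1) * (G - of_real a) = - of_real (c^2 + b^2)"
      by (simp add: GC a_def c_def complex_eq_iff power2_eq_square algebra_simps)
    have dz: "2 * z0 * deriv g z0 = - of_real (k * (c^2+b^2) / c)"
      unfolding e2 P using c0 by (simp add: field_simps)
    define s where "s = b / c"
    have bs: "b = c * s" using c0 by (simp add: s_def)
    have Neq: "G + 2 * z0 * deriv g z0 = Complex (L - c*k*(1+s^2)) (c * s)"
      unfolding dz GC bs using c0 by (simp add: complex_eq_iff field_simps power2_eq_square)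
    have Geq: "G = Complex L (c * s)" by (simp add: GC bs)
    have z0B: "z0 \<in> ball 0 1" using r1 by (simp add: r_def)
    have GnZ: "G \<noteq> 0" using gnz[OF z0B] by (simp add: G_def)
    have "U_op f z0 = (Complex (L - c*k*(1+s^2)) (c * s) - G^3) / G^3"
      using Uform[OF z0B z0ne] Neq GnZ by (simp add: G_def[symmetric] field_simps)
    hence "cmod (U_op f z0) = cmod (Complex (L - (1-L)*k*(1+s^2)) ((1-L) * s) - (Complex L ((1-L) * s))^3) / cmod (Complex L ((1-L) * s)) ^3"
      by (simp add: Geq norm_divide norm_power c_def)
    moreover have "cmod (Complex L ((1-L) * s)) ^3 > 0" using GnZ Geq by (simp add: c_def)
    moreover note final_ineq[OF L1 L2, of k s]
    ultimately have "cmod (U_op f z0) \<ge> 1" using kL by (simp add: c_def)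
    moreover have "cmod (U_op f z0) < 1" using Ult z0B z0ne by auto
    ultimately show False by simp
  qed
  show ?thesis using main aL unfolding x_def by force
qed

end
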